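(* Let $d>1$ and let $s$ be an integer with $1<s<2^d$, written as $s=j\cdot 2^k$ with $j$ odd and $k\ge 1$. Then \[\lambda^*(d,s+1)\ge \frac1e\,(1-2^{-k})\quad\text{and}\quad \lambda^*(d,s-1)\ge\frac1e\,(1-2^{-k}).\]
   Context: For integers $n\ge d\ge 1$, a $d$-flat in $\mathbb{F}_2^n$ is a set $x_0+U$ with $x_0\in\mathbb{F}_2^n$ and $U$ a $d$-dimensional linear subspace of $\mathbb{F}_2^n$. For $A\subseteq\mathbb{F}_2^n$ and an integer $0\le s\le 2^d$, $\lambda^*(n,d,s,A)$ denotes the fraction of $d$-flats $Q$ in $\mathbb{F}_2^n$ with $|Q\cap A|=s$. Let $\lambda^*(n,d,s)=\max_{A\subseteq\mathbb{F}_2^n}\lambda^*(n,d,s,A)$; this is non-increasing in $n$, and $\lambda^*(d,s)=\lim_{n\to\infty}\lambda^*(n,d,s)$. *)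

theory Defs
  imports Complex_Main
begin

text \<open>Vectors of F_2^n are represented by their supports: subsets of {..<n}.
  Vector addition is symmetric difference; the zero vector is the empty set.\<close>

definition F2vec :: "nat \<Rightarrow> nat set set" where
  "F2vec n = Pow {..<n}"

definition vadd :: "nat set \<Rightarrow> nat set \<Rightarrow> nat set" where
  "vadd x y = (x - y) \<union> (y - x)"

definition vsum :: "nat set set \<Rightarrow> nat set" where
  "vsum S = {i. odd (card {v \<in> S. i \<in> v})}"

definition is_subspace_dim :: "nat \<Rightarrow> nat \<Rightarrow> nat set set \<Rightarrow> bool" where
  "is_subspace_dim n d U \<longleftrightarrow>
     (\<exists>B. B \<subseteq> F2vec n \<and> finite B \<and> card B = d \<and>
          (\<forall>S \<subseteq> B. S \<noteq> {} \<longrightarrow> vsum S \<noteq> {}) \<and>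
          U = vsum ` Pow B)"

definition flats :: "nat \<Rightarrow> nat \<Rightarrow> nat set set set" where
  "flats n d = {vadd x0 ` U | x0 U. x0 \<in> F2vec n \<and> is_subspace_dim n d U}"

definition lam_A :: "nat \<Rightarrow> nat \<Rightarrow> nat \<Rightarrow> nat set set \<Rightarrow> real" where
  "lam_A n d s A = real (card {Q \<in> flats n d. card (Q \<inter> A) = s}) / real (card (flats n d))"

definition lam_n :: "nat \<Rightarrow> nat \<Rightarrow> nat \<Rightarrow> real" where
  "lam_n n d s = Max ((\<lambda>A. lam_A n d s A) ` Pow (F2vec n))"

definition lam_star :: "nat \<Rightarrow> nat \<Rightarrow> real" where
  "lam_star d s = lim (\<lambda>n. lam_n n d s)"

end

theory Submission
  imports Defs
begin

definition symd :: "'a set \<Rightarrow> 'a set \<Rightarrow> 'a set" where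
  "symd X Y = (X - Y) \<union> (Y - X)"

lemma card_symd:
  assumes "finite X" "finite Y"
  shows "card (symd X Y) + 2 * card (X \<inter> Y) = card X + card Y"
proof -
  have d: "card (symd X Y) = card (X - Y) + card (Y - X)"
    unfolding symd_def using assms by (intro card_Un_disjoint) auto
  have a: "card (X - Y) = card X - card (X \<inter> Y)" by (rule card_Diff_subset_Int) (use assms in auto)
  have b: "card (Y - X) = card Y - card (Y \<inter> X)" by (rule card_Diff_subset_Int) (use assms in auto)
  have c1: "card (X \<inter> Y) \<le> card X" using assms by (intro card_mono) auto
  have c2: "card (Y \<inter> X) \<le> card Y" using assms by (intro card_mono) auto
  have "Y \<inter> X = X \<inter> Y" by auto
  then show ?thesis using d a b c1 c2 by auto
qed

lemma odd_card_symd: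
  assumes "finite X" "finite Y"
  shows "odd (card (symd X Y)) \<longleftrightarrow> (odd (card X) \<noteq> odd (card Y))"
proof -
  from card_symd[OF assms] show ?thesis by presburger
qed

lemma vadd_symd: "vadd x y = symd x y" unfolding vadd_def symd_def by simp

lemma vadd_simps[simp]:
  "vadd x {} = x" "vadd {} x = x" "vadd x x = {}" "vadd x (vadd x y) = y" "vadd (vadd y x) x = y"
  unfolding vadd_def by auto

lemma vadd_comm: "vadd x y = vadd y x" unfolding vadd_def by auto
lemma vadd_assoc: "vadd (vadd x y) z = vadd x (vadd y z)" unfolding vadd_def by auto
lemma vadd_left_cancel: "vadd x y = vadd x z \<longleftrightarrow> y = z" unfolding vadd_def by auto
lemma vadd_eq_empty: "vadd x y = {} \<longleftrightarrow> x = y" unfolding vadd_def by auto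
lemma vadd_F2vec: "x \<in> F2vec n \<Longrightarrow> y \<in> F2vec n \<Longrightarrow> vadd x y \<in> F2vec n"
  unfolding vadd_def F2vec_def by auto
lemma finite_F2vec[simp]: "finite (F2vec n)" unfolding F2vec_def by simp
lemma card_F2vec: "card (F2vec n) = 2 ^ n" unfolding F2vec_def by (simp add: card_Pow)
lemma F2vec_finite_elem: "x \<in> F2vec n \<Longrightarrow> finite x" unfolding F2vec_def
  by (auto intro: finite_subset)
lemma inj_vadd: "inj (vadd x)" unfolding inj_def by (simp add: vadd_left_cancel)

lemma vsum_empty[simp]: "vsum {} = {}" unfolding vsum_def by simp

lemma vsum_symd:
  assumes "finite S1" "finite S2"
  shows "vsum (symd S1 S2) = vadd (vsum S1) (vsum S2)"
proof -
  have "i \<in> vsum (symd S1 S2) \<longleftrightarrow> i \<in> vadd (vsum S1) (vsum S2)" for i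
  proof -
    have e: "{v \<in> symd S1 S2. i \<in> v} = symd {v \<in> S1. i \<in> v} {v \<in> S2. i \<in> v}"
      unfolding symd_def by auto
    have "odd (card {v \<in> symd S1 S2. i \<in> v}) \<longleftrightarrow>
         (odd (card {v \<in> S1. i \<in> v}) \<noteq> odd (card {v \<in> S2. i \<in> v}))"
      unfolding e by (rule odd_card_symd) (use assms in auto)
    then show ?thesis unfolding vsum_def vadd_def by auto
  qed
  then show ?thesis by blast
qed

lemma vsum_insert:
  assumes "finite S" "x \<notin> S"
  shows "vsum (insert x S) = vadd x (vsum S)"
proof -
  have "insert x S = symd {x} S" unfolding symd_def using assms by auto
  moreover have "vsum {x} = x"
  proof -
    have "{v \<in> {x}. i \<in> v} = (if i \<in> x then {x} else {})" for i by auto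
    then show ?thesis unfolding vsum_def by auto
  qed
  ultimately show ?thesis using vsum_symd[of "{x}" S] assms by simp
qed

lemma vsum_F2vec:
  assumes "S \<subseteq> F2vec n"
  shows "vsum S \<in> F2vec n"
proof -
  have "i < n" if "i \<in> vsum S" for i
  proof -
    from that have "odd (card {v \<in> S. i \<in> v})" unfolding vsum_def by simp
    then have "{v \<in> S. i \<in> v} \<noteq> {}" by (metis card.empty even_zero)
    then obtain v where "v \<in> S" "i \<in> v" by auto
    then show ?thesis using assms unfolding F2vec_def by auto
  qed
  then show ?thesis unfolding F2vec_def by auto
qed

definition indep :: "nat set set \<Rightarrow> bool" where
  "indep B \<longleftrightarrow> (\<forall>S \<subseteq> B. S \<noteq> {} \<longrightarrow> vsum S \<noteq> {})"

lemma is_subspace_dim_iff: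
  "is_subspace_dim n d U \<longleftrightarrow> (\<exists>B. B \<subseteq> F2vec n \<and> finite B \<and> card B = d \<and> indep B \<and> U = vsum ` Pow B)"
  unfolding is_subspace_dim_def indep_def by simp

lemma symd_subset: "S1 \<subseteq> B \<Longrightarrow> S2 \<subseteq> B \<Longrightarrow> symd S1 S2 \<subseteq> B" unfolding symd_def by auto
lemma symd_empty_iff: "symd S1 S2 = {} \<longleftrightarrow> S1 = S2" unfolding symd_def by auto

lemma span_inj:
  assumes "finite B" "indep B"
  shows "inj_on vsum (Pow B)"
proof (rule inj_onI)
  fix S1 S2 assume s: "S1 \<in> Pow B" "S2 \<in> Pow B" "vsum S1 = vsum S2"
  have f: "finite S1" "finite S2" using s assms by (auto intro: finite_subset)
  have "vsum (symd S1 S2) = {}" using vsum_symd[OF f] s by simp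
  moreover have "symd S1 S2 \<subseteq> B" using s symd_subset by simp
  ultimately have "symd S1 S2 = {}" using assms unfolding indep_def by blast
  then show "S1 = S2" by (simp add: symd_empty_iff)
qed

lemma span_card:
  assumes "finite B" "indep B"
  shows "card (vsum ` Pow B) = 2 ^ card B"
  using span_inj[OF assms] assms by (simp add: card_image card_Pow)

lemma span_closed:
  assumes "finite B" "u \<in> vsum ` Pow B" "v \<in> vsum ` Pow B"
  shows "vadd u v \<in> vsum ` Pow B"
proof -
  obtain S1 S2 where s: "S1 \<subseteq> B" "S2 \<subseteq> B" "u = vsum S1" "v = vsum S2" using assms by auto
  have f: "finite S1" "finite S2" using s assms by (auto intro: finite_subset)
  have "vadd u v = vsum (symd S1 S2)" using vsum_symd[OF f] s by simp
  moreover have "symd S1 S2 \<in> Pow B" using s symd_subset by simp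
  ultimately show ?thesis by blast
qed

lemma span_zero: "{} \<in> vsum ` Pow B"
  by (metis Pow_bottom image_eqI vsum_empty)

lemma span_F2vec: "B \<subseteq> F2vec n \<Longrightarrow> vsum ` Pow B \<subseteq> F2vec n"
  using vsum_F2vec by (metis PowD image_subsetI order_trans)


definition chi :: "nat set \<Rightarrow> nat set \<Rightarrow> real" where
  "chi w x = (if even (card (x \<inter> w)) then 1 else -1)"

lemma chi_vadd:
  assumes "finite w"
  shows "chi w (vadd x y) = chi w x * chi w y"
proof -
  have e: "vadd x y \<inter> w = symd (x \<inter> w) (y \<inter> w)" unfolding vadd_def symd_def by auto
  have "odd (card (vadd x y \<inter> w)) \<longleftrightarrow> (odd (card (x \<inter> w)) \<noteq> odd (card (y \<inter> w)))"
    unfolding e by (rule odd_card_symd) (use assms in auto)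
  then show ?thesis unfolding chi_def by auto
qed

lemma chi_cases: "chi w x = 1 \<or> chi w x = -1" unfolding chi_def by auto
lemma chi_empty[simp]: "chi {} x = 1" unfolding chi_def by simp

lemma chi_sum_w:
  assumes "finite u"
  shows "(\<Sum>w\<in>Pow {..<N}. chi w u) = (if u \<inter> {..<N} = {} then 2 ^ N else 0)"
proof (cases "u \<inter> {..<N} = {}")
  case True
  have "(\<Sum>w\<in>Pow {..<N}. chi w u) = (\<Sum>w\<in>Pow {..<N}. 1)"
  proof (rule sum.cong)
    fix w assume "w \<in> Pow {..<N}"
    then have "u \<inter> w = {}" using True by auto
    then show "chi w u = 1" unfolding chi_def by simp
  qed simp
  also have "\<dots> = 2 ^ N" by (simp add: card_Pow)
  finally show ?thesis using True by simp
next
  case False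
  then obtain i where i: "i \<in> u" "i < N" by auto
  define \<tau> where "\<tau> w = symd w {i}" for w :: "nat set"
  have tt: "\<tau> (\<tau> w) = w" for w unfolding \<tau>_def symd_def by auto
  have tin: "w \<in> Pow {..<N} \<Longrightarrow> \<tau> w \<in> Pow {..<N}" for w unfolding \<tau>_def symd_def using i by auto
  have neg: "chi (\<tau> w) u = - chi w u" for w
  proof -
    have e: "u \<inter> \<tau> w = symd (u \<inter> w) {i}" unfolding \<tau>_def symd_def using i by auto
    have "odd (card (u \<inter> \<tau> w)) \<longleftrightarrow> (odd (card (u \<inter> w)) \<noteq> odd (card {i}))"
      unfolding e by (rule odd_card_symd) (use assms in auto)
    then show ?thesis unfolding chi_def by (auto simp: Int_commute)
  qed
  have "(\<Sum>w\<in>Pow {..<N}. chi w u) = (\<Sum>w\<in>Pow {..<N}. chi (\<tau> w) u)"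
    by (rule sum.reindex_bij_witness[of _ \<tau> \<tau>]) (use tt tin in auto)
  also have "\<dots> = - (\<Sum>w\<in>Pow {..<N}. chi w u)" by (simp add: neg sum_negf)
  finally show ?thesis using False by simp
qed

lemma chi_sum_group:
  assumes "finite w" "finite U" "\<And>u v. u \<in> U \<Longrightarrow> v \<in> U \<Longrightarrow> vadd u v \<in> U"
  shows "(\<Sum>u\<in>U. chi w u) = (if \<forall>u\<in>U. chi w u = 1 then real (card U) else 0)"
proof (cases "\<forall>u\<in>U. chi w u = 1")
  case True
  then show ?thesis by simp
next
  case False
  then obtain u0 where u0: "u0 \<in> U" "chi w u0 = -1" using chi_cases by blast
  have "(\<Sum>u\<in>U. chi w u) = (\<Sum>u\<in>U. chi w (vadd u0 u))"
    by (rule sum.reindex_bij_witness[of _ "vadd u0" "vadd u0"]) (auto simp: u0 assms(3))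
  also have "\<dots> = - (\<Sum>u\<in>U. chi w u)" by (simp add: chi_vadd[OF assms(1)] u0 sum_negf)
  finally have "(\<Sum>u\<in>U. chi w u) = 0" by simp
  then show ?thesis using False by (subst if_not_P) auto
qed

lemma annihilator_count:
  assumes "finite U" "U \<subseteq> F2vec N" "{} \<in> U" "\<And>u v. u \<in> U \<Longrightarrow> v \<in> U \<Longrightarrow> vadd u v \<in> U"
  shows "card {w \<in> Pow {..<N}. \<forall>u\<in>U. chi w u = 1} * card U = 2 ^ N"
proof -
  have fw: "finite w" if "w \<in> Pow {..<N}" for w using that by (auto intro: finite_subset)
  have fu: "finite u" if "u \<in> U" for u using that assms(2) F2vec_finite_elem by blast
  have "(\<Sum>w\<in>Pow {..<N}. \<Sum>u\<in>U. chi w u) =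
        (\<Sum>w\<in>Pow {..<N}. (if \<forall>u\<in>U. chi w u = 1 then real (card U) else 0))"
    by (rule sum.cong) (auto simp: chi_sum_group[OF fw assms(1) assms(4)])
  also have "\<dots> = real (card {w \<in> Pow {..<N}. \<forall>u\<in>U. chi w u = 1}) * real (card U)"
    by (subst sum.inter_filter[symmetric]) auto
  finally have 1: "(\<Sum>w\<in>Pow {..<N}. \<Sum>u\<in>U. chi w u) = \<dots>" .
  have "(\<Sum>w\<in>Pow {..<N}. \<Sum>u\<in>U. chi w u) = (\<Sum>u\<in>U. \<Sum>w\<in>Pow {..<N}. chi w u)"
    by (rule sum.swap)
  also have "\<dots> = (\<Sum>u\<in>U. if u = {} then 2 ^ N else 0)"
  proof (rule sum.cong)
    fix u assume u: "u \<in> U"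
    then have "u \<inter> {..<N} = u" using assms(2) unfolding F2vec_def by auto
    then show "(\<Sum>w\<in>Pow {..<N}. chi w u) = (if u = {} then 2 ^ N else 0)"
      using chi_sum_w[OF fu[OF u], of N] by simp
  qed simp
  also have "\<dots> = 2 ^ N" by (simp only: sum.delta[OF assms(1)] if_P[OF assms(3)])
  finally have "real (card {w \<in> Pow {..<N}. \<forall>u\<in>U. chi w u = 1}) * real (card U) = 2 ^ N"
    using 1 by simp
  then have "real (card {w \<in> Pow {..<N}. \<forall>u\<in>U. chi w u = 1} * card U) = real (2 ^ N)"
    by simp
  then show ?thesis by (simp only: of_nat_eq_iff)
qed


lemma flats_iff:
  "Q \<in> flats n d \<longleftrightarrow> (\<exists>x0 B. x0 \<in> F2vec n \<and> B \<subseteq> F2vec n \<and> finite B \<and> card B = d \<and> indep B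
      \<and> Q = vadd x0 ` (vsum ` Pow B))" (is "?L \<longleftrightarrow> ?R")
proof
  assume ?L
  then obtain x0 U where "Q = vadd x0 ` U" "x0 \<in> F2vec n" "is_subspace_dim n d U"
    unfolding flats_def by auto
  then show ?R unfolding is_subspace_dim_iff by metis
next
  assume ?R
  then obtain x0 B where "x0 \<in> F2vec n \<and> B \<subseteq> F2vec n \<and> finite B \<and> card B = d \<and> indep B
      \<and> Q = vadd x0 ` (vsum ` Pow B)" by blast
  then show ?L unfolding flats_def is_subspace_dim_iff by blast
qed

lemma flatE:
  assumes "Q \<in> flats n d"
  obtains x0 U where "x0 \<in> F2vec n" "U \<subseteq> F2vec n" "finite U" "card U = 2 ^ d" "{} \<in> U"
    "\<And>u v. u \<in> U \<Longrightarrow> v \<in> U \<Longrightarrow> vadd u v \<in> U" "Q = vadd x0 ` U"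
proof -
  obtain x0 B where b: "x0 \<in> F2vec n" "B \<subseteq> F2vec n" "finite B" "card B = d" "indep B"
    "Q = vadd x0 ` (vsum ` Pow B)" using assms unfolding flats_iff by (elim exE conjE) auto
  show ?thesis
  proof (rule that[of x0 "vsum ` Pow B"])
    show "vsum ` Pow B \<subseteq> F2vec n" using span_F2vec b(2) by simp
    show "card (vsum ` Pow B) = 2 ^ d" using span_card b by simp
  qed (use b(1,3,6) span_zero span_closed in simp_all)
qed

lemma flat_sub: "Q \<in> flats n d \<Longrightarrow> Q \<subseteq> F2vec n"
  by (erule flatE) (auto intro: vadd_F2vec)

lemma inj_on_vadd: "inj_on (vadd x) A"
  using inj_vadd inj_on_subset by blast

lemma flat_card: "Q \<in> flats n d \<Longrightarrow> card Q = 2 ^ d"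
proof (erule flatE)
  fix x0 U assume "card U = 2 ^ d" "Q = vadd x0 ` U"
  then show "card Q = 2 ^ d" using card_image[OF inj_on_vadd] by simp
qed

lemma flat_finite: "Q \<in> flats n d \<Longrightarrow> finite Q"
  by (rule finite_subset[OF flat_sub finite_F2vec])

lemma flat_nonempty: "Q \<in> flats n d \<Longrightarrow> Q \<noteq> {}"
proof
  assume "Q \<in> flats n d" "Q = {}"
  then have "card Q = 2 ^ d" "card Q = 0" using flat_card[of Q n d] by auto
  then show False by simp
qed

lemma finite_flats[simp]: "finite (flats n d)"
proof -
  have "flats n d \<subseteq> Pow (F2vec n)" using flat_sub by blast
  then show ?thesis by (rule finite_subset) simp
qed

definition pconst :: "nat set \<Rightarrow> nat set set \<Rightarrow> bool" where
  "pconst w Q \<longleftrightarrow> (\<forall>x\<in>Q. \<forall>y\<in>Q. chi w x = chi w y)"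

lemma pconst_iff:
  assumes "finite w" "{} \<in> U" "Q = vadd x0 ` U"
  shows "pconst w Q \<longleftrightarrow> (\<forall>u\<in>U. chi w u = 1)"
proof
  assume p: "pconst w Q"
  show "\<forall>u\<in>U. chi w u = 1"
  proof
    fix u assume "u \<in> U"
    then have "chi w (vadd x0 u) = chi w (vadd x0 {})" using p assms unfolding pconst_def by blast
    then have "chi w x0 * chi w u = chi w x0" by (simp add: chi_vadd[OF assms(1)])
    moreover have "chi w x0 \<noteq> 0" using chi_cases[of w x0] by auto
    ultimately show "chi w u = 1" by simp
  qed
next
  assume "\<forall>u\<in>U. chi w u = 1"
  then show "pconst w Q" unfolding pconst_def assms(3) by (auto simp: chi_vadd[OF assms(1)])
qed

lemma pconst_count:
  assumes "Q \<in> flats N d"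
  shows "card {w \<in> Pow {..<N}. pconst w Q} = 2 ^ (N - d)" "d \<le> N"
proof -
  obtain x0 U where u: "x0 \<in> F2vec N" "U \<subseteq> F2vec N" "finite U" "card U = 2 ^ d" "{} \<in> U"
    "\<And>u v. u \<in> U \<Longrightarrow> v \<in> U \<Longrightarrow> vadd u v \<in> U" "Q = vadd x0 ` U" using flatE[OF assms] by metis
  have "(2::nat) ^ d \<le> 2 ^ N" using card_mono[OF finite_F2vec u(2)] u(4) card_F2vec by simp
  then show dN: "d \<le> N" by simp
  have e: "{w \<in> Pow {..<N}. pconst w Q} = {w \<in> Pow {..<N}. \<forall>u\<in>U. chi w u = 1}"
    using pconst_iff[OF _ u(5,7)] by (auto intro: finite_subset)
  have "card {w \<in> Pow {..<N}. pconst w Q} * 2 ^ d = 2 ^ N"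
    using annihilator_count[OF u(3,2,5,6)] u(4) e by simp
  also have "(2::nat) ^ N = 2 ^ (N - d) * 2 ^ d" using dN by (simp add: power_add[symmetric])
  finally show "card {w \<in> Pow {..<N}. pconst w Q} = 2 ^ (N - d)" by simp
qed

lemma flat_chi_sum:
  assumes "finite w" "finite U" "\<And>u v. u \<in> U \<Longrightarrow> v \<in> U \<Longrightarrow> vadd u v \<in> U" "Q = vadd x0 ` U"
  shows "(\<Sum>x\<in>Q. chi w x) = chi w x0 * (if \<forall>u\<in>U. chi w u = 1 then real (card U) else 0)"
proof -
  have "(\<Sum>x\<in>Q. chi w x) = (\<Sum>u\<in>U. chi w (vadd x0 u))"
    unfolding assms(4) using sum.reindex[OF inj_on_vadd, of "chi w" x0 U] by (simp add: comp_def)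
  also have "\<dots> = chi w x0 * (\<Sum>u\<in>U. chi w u)" by (simp add: chi_vadd[OF assms(1)] sum_distrib_left)
  finally show ?thesis by (simp add: chi_sum_group[OF assms(1-3)])
qed

lemma flats_nonempty:
  assumes "d \<le> n"
  shows "flats n d \<noteq> {}"
proof -
  define B where "B = (\<lambda>i. {i}) ` {..<d}"
  have vs: "vsum S = \<Union>S" if "S \<subseteq> B" for S
  proof -
    have "{v \<in> S. i \<in> v} = (if {i} \<in> S then {{i}} else {})" for i using that unfolding B_def by auto
    then show ?thesis unfolding vsum_def using that unfolding B_def by auto
  qed
  have ind: "indep B" unfolding indep_def
  proof (intro allI impI)
    fix S assume S: "S \<subseteq> B" "S \<noteq> {}"
    then obtain v where "v \<in> S" by auto
    moreover then obtain i where "v = {i}" using S unfolding B_def by auto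
    ultimately show "vsum S \<noteq> {}" using vs[OF S(1)] by auto
  qed
  have "B \<subseteq> F2vec n" unfolding B_def F2vec_def using assms by auto
  moreover have "card B = d" unfolding B_def by (subst card_image) (auto simp: inj_on_def)
  moreover have "{} \<in> F2vec n" unfolding F2vec_def by simp
  ultimately have "vadd {} ` (vsum ` Pow B) \<in> flats n d" unfolding flats_iff using ind
    by (metis B_def finite_imageI finite_lessThan)
  then show ?thesis by blast
qed


definition linmap :: "nat \<Rightarrow> nat \<Rightarrow> (nat set \<Rightarrow> nat set) \<Rightarrow> bool" where
  "linmap n N L \<longleftrightarrow> (\<forall>x\<in>F2vec n. L x \<in> F2vec N) \<and>
     (\<forall>x\<in>F2vec n. \<forall>y\<in>F2vec n. L (vadd x y) = vadd (L x) (L y)) \<and> inj_on L (F2vec n)"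

lemma empty_F2vec[simp]: "{} \<in> F2vec n" unfolding F2vec_def by simp

lemma lin_zero:
  assumes "linmap n N L" shows "L {} = {}"
proof -
  have "L (vadd {} {}) = vadd (L {}) (L {})" using assms empty_F2vec unfolding linmap_def by blast
  then show ?thesis by simp
qed

lemma lin_vsum:
  assumes "linmap n N L" "finite S" "S \<subseteq> F2vec n"
  shows "L (vsum S) = vsum (L ` S)"
  using assms(2,3)
proof (induction S rule: finite_induct)
  case empty
  then show ?case using lin_zero[OF assms(1)] by simp
next
  case (insert x S)
  have xS: "L x \<notin> L ` S" using insert assms(1) unfolding linmap_def inj_on_def by blast
  have "L (vsum (insert x S)) = L (vadd x (vsum S))" using insert by (simp add: vsum_insert)
  also have "\<dots> = vadd (L x) (L (vsum S))"
    using assms(1) insert vsum_F2vec[of S n] unfolding linmap_def by simp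
  also have "\<dots> = vadd (L x) (vsum (L ` S))" using insert by simp
  also have "\<dots> = vsum (L ` insert x S)" using xS insert by (simp add: vsum_insert)
  finally show ?case .
qed

lemma lin_image_flat:
  assumes "linmap n N L" "finite B" "B \<subseteq> F2vec n" "x0 \<in> F2vec n"
  shows "(\<lambda>y. vadd c (L y)) ` (vadd x0 ` (vsum ` Pow B)) = vadd (vadd c (L x0)) ` (vsum ` Pow (L ` B))"
proof -
  have e: "vadd c (L (vadd x0 (vsum S))) = vadd (vadd c (L x0)) (vsum (L ` S))" if "S \<subseteq> B" for S
  proof -
    have "finite S" "S \<subseteq> F2vec n" using that assms finite_subset by auto
    then have "L (vadd x0 (vsum S)) = vadd (L x0) (vsum (L ` S))"
      using assms(1,4) vsum_F2vec lin_vsum unfolding linmap_def by metis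
    then show ?thesis by (simp add: vadd_assoc)
  qed
  have "(\<lambda>y. vadd c (L y)) ` (vadd x0 ` (vsum ` Pow B)) = (\<lambda>S. vadd (vadd c (L x0)) (vsum (L ` S))) ` Pow B"
    using e by (auto simp: image_iff)
  also have "\<dots> = vadd (vadd c (L x0)) ` vsum ` ((`) L ` Pow B)" by (simp add: image_image)
  also have "(`) L ` Pow B = Pow (L ` B)" by (rule image_Pow_surj) simp
  finally show ?thesis .
qed

lemma lin_indep:
  assumes "linmap n N L" "finite B" "B \<subseteq> F2vec n" "indep B"
  shows "indep (L ` B)"
  unfolding indep_def
proof (intro allI impI)
  fix T assume T: "T \<subseteq> L ` B" "T \<noteq> {}"
  define S where "S = {b \<in> B. L b \<in> T}"
  have TS: "T = L ` S" using T unfolding S_def by auto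
  have S: "S \<subseteq> B" "S \<noteq> {}" "finite S" using T TS assms(2) unfolding S_def by (auto intro: finite_subset)
  have "vsum S \<noteq> {}" using assms(4) S unfolding indep_def by blast
  moreover have "vsum S \<in> F2vec n" using S assms(3) vsum_F2vec by blast
  ultimately have "L (vsum S) \<noteq> L {}" using assms(1) unfolding linmap_def inj_on_def by force
  then show "vsum T \<noteq> {}" using lin_vsum[OF assms(1) S(3)] S assms(3) TS lin_zero[OF assms(1)] by auto
qed

lemma lin_flat:
  assumes "linmap n N L" "c \<in> F2vec N" "Q \<in> flats n d"
  shows "(\<lambda>y. vadd c (L y)) ` Q \<in> flats N d"
proof -
  obtain x0 B where b: "x0 \<in> F2vec n" "B \<subseteq> F2vec n" "finite B" "card B = d" "indep B"
    "Q = vadd x0 ` (vsum ` Pow B)" using assms(3) unfolding flats_iff by (elim exE conjE) auto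
  have LB: "L ` B \<subseteq> F2vec N" "finite (L ` B)" "card (L ` B) = d" "indep (L ` B)"
    using b assms(1) lin_indep[OF assms(1) b(3,2,5)] unfolding linmap_def
    by (auto simp: card_image inj_on_subset)
  have "vadd c (L x0) \<in> F2vec N" using assms(1,2) b(1) vadd_F2vec unfolding linmap_def by blast
  then show ?thesis unfolding b(6) lin_image_flat[OF assms(1) b(3,2,1)] flats_iff using LB by blast
qed

lemma lin_flat_pre:
  assumes "linmap n N L" "c \<in> F2vec N" "Q' \<in> flats N d" "Q' \<subseteq> (\<lambda>y. vadd c (L y)) ` F2vec n"
  shows "\<exists>Q\<in>flats n d. Q' = (\<lambda>y. vadd c (L y)) ` Q"
proof -
  obtain x0' B' where b: "x0' \<in> F2vec N" "B' \<subseteq> F2vec N" "finite B'" "card B' = d" "indep B'"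
    "Q' = vadd x0' ` (vsum ` Pow B')" using assms(3) unfolding flats_iff by (elim exE conjE) auto
  have "vadd x0' (vsum {}) \<in> Q'" unfolding b(6) by blast
  then have "x0' \<in> Q'" by simp
  then obtain y0 where y0: "y0 \<in> F2vec n" "x0' = vadd c (L y0)" using assms(4) by auto
  have Lcl: "\<And>x y. x \<in> F2vec n \<Longrightarrow> y \<in> F2vec n \<Longrightarrow> L (vadd x y) = vadd (L x) (L y)"
    using assms(1) unfolding linmap_def by blast
  have vs1: "vsum {b} = b" for b
  proof -
    have "{v \<in> {b}. i \<in> v} = (if i \<in> b then {b} else {})" for i by auto
    then show ?thesis unfolding vsum_def by auto
  qed
  have BL: "B' \<subseteq> L ` F2vec n"
  proof
    fix b assume bB: "b \<in> B'"
    have "vadd x0' (vsum {b}) \<in> Q'" unfolding b(6) using bB by blast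
    then have "vadd x0' b \<in> Q'" by (simp only: vs1)
    then obtain yb where yb: "yb \<in> F2vec n" "vadd x0' b = vadd c (L yb)" using assms(4) by auto
    have "vadd x0' (vadd x0' b) = vadd x0' (vadd c (L yb))" using yb(2) by simp
    then have "b = vadd x0' (vadd c (L yb))" by (simp only: vadd_simps)
    also have "\<dots> = vadd (L y0) (L yb)" unfolding y0(2) vadd_def by blast
    also have "\<dots> = L (vadd y0 yb)" using Lcl y0(1) yb(1) by simp
    finally show "b \<in> L ` F2vec n" using vadd_F2vec y0(1) yb(1) by blast
  qed
  define B where "B = {y \<in> F2vec n. L y \<in> B'}"
  have LB: "L ` B = B'" using BL unfolding B_def by auto
  have Bs: "B \<subseteq> F2vec n" "finite B" unfolding B_def by auto
  have injB: "inj_on L B" using assms(1) Bs(1) unfolding linmap_def using inj_on_subset by blast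
  have cB: "card B = d" using card_image[OF injB] LB b(4) by simp
  have iB: "indep B" unfolding indep_def
  proof (intro allI impI)
    fix S assume S: "S \<subseteq> B" "S \<noteq> {}"
    have fS: "finite S" by (rule finite_subset[OF S(1) Bs(2)])
    have SF: "S \<subseteq> F2vec n" using S(1) Bs(1) by blast
    have "L ` S \<subseteq> B'" "L ` S \<noteq> {}" using S LB by auto
    then have ne: "vsum (L ` S) \<noteq> {}" using b(5)[unfolded indep_def, rule_format, of "L ` S"] by simp
    have eq: "L (vsum S) = vsum (L ` S)" by (rule lin_vsum[OF assms(1) fS SF])
    show "vsum S \<noteq> {}"
    proof
      assume "vsum S = {}"
      then have "L (vsum S) = {}" using lin_zero[OF assms(1)] by simp
      then show False using ne eq by simp
    qed
  qed
  have F: "vadd y0 ` (vsum ` Pow B) \<in> flats n d" unfolding flats_iff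
    by (intro exI[of _ y0] exI[of _ B]) (simp add: Bs cB iB y0(1))
  have E: "(\<lambda>y. vadd c (L y)) ` (vadd y0 ` (vsum ` Pow B)) = Q'"
    unfolding lin_image_flat[OF assms(1) Bs(2,1) y0(1)] LB b(6) y0(2) ..
  show ?thesis
  proof (rule bexI[of _ "vadd y0 ` (vsum ` Pow B)"])
    show "Q' = (\<lambda>y. vadd c (L y)) ` (vadd y0 ` (vsum ` Pow B))" using E by simp
  qed (rule F)
qed


definition cos :: "nat \<Rightarrow> nat set \<Rightarrow> bool \<Rightarrow> nat set set" where
  "cos N w b = {x \<in> F2vec N. odd (card (x \<inter> w)) = b}"

lemma mem_vadd: "x \<in> vadd A B \<longleftrightarrow> (x \<in> A) \<noteq> (x \<in> B)" unfolding vadd_def by auto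

lemma coset_iso:
  assumes "w \<subseteq> {..<Suc n}" "w \<noteq> {}"
  shows "\<exists>L c. linmap n (Suc n) L \<and> c \<in> F2vec (Suc n) \<and> (\<lambda>y. vadd c (L y)) ` F2vec n = cos (Suc n) w b"
proof -
  obtain i where i: "i \<in> w" using assms(2) by auto
  have iN: "i < Suc n" using i assms(1) by auto
  have fw: "finite w" using assms(1) finite_subset by blast
  define \<sigma> where "\<sigma> j = (if j < i then j else Suc j)" for j
  have inj\<sigma>: "inj \<sigma>" unfolding inj_def \<sigma>_def by auto
  have \<sigma>i: "\<sigma> j \<noteq> i" for j unfolding \<sigma>_def by auto
  define par where "par y = odd (card (\<sigma> ` y \<inter> w))" for y
  define L where "L y = \<sigma> ` y \<union> (if par y then {i} else {})" for y
  have memL: "x \<in> L y \<longleftrightarrow> (if x = i then par y else x \<in> \<sigma> ` y)" for x y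
    unfolding L_def using \<sigma>i by auto
  have fin\<sigma>: "finite (\<sigma> ` y \<inter> w)" for y using fw by simp
  have \<sigma>vadd: "\<sigma> ` (vadd y z) = vadd (\<sigma> ` y) (\<sigma> ` z)" for y z
    unfolding vadd_def using inj\<sigma> by (simp add: image_Un image_set_diff)
  have parvadd: "par (vadd y z) \<longleftrightarrow> (par y \<noteq> par z)" for y z
  proof -
    have "\<sigma> ` (vadd y z) \<inter> w = vadd (\<sigma> ` y) (\<sigma> ` z) \<inter> w" by (simp only: \<sigma>vadd)
    also have "\<dots> = symd (\<sigma> ` y \<inter> w) (\<sigma> ` z \<inter> w)" unfolding vadd_def symd_def by blast
    finally have "\<sigma> ` (vadd y z) \<inter> w = symd (\<sigma> ` y \<inter> w) (\<sigma> ` z \<inter> w)" .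
    then show ?thesis unfolding par_def using odd_card_symd[OF fin\<sigma> fin\<sigma>] by simp
  qed
  have lin: "linmap n (Suc n) L"
    unfolding linmap_def
  proof (intro conjI ballI)
    fix y assume "y \<in> F2vec n"
    then have "\<sigma> ` y \<subseteq> {..<Suc n}" unfolding F2vec_def \<sigma>_def by auto
    then show "L y \<in> F2vec (Suc n)" unfolding F2vec_def L_def using iN by auto
  next
    fix y z
    show "L (vadd y z) = vadd (L y) (L z)"
    proof (rule set_eqI)
      fix x show "x \<in> L (vadd y z) \<longleftrightarrow> x \<in> vadd (L y) (L z)"
        unfolding mem_vadd memL parvadd \<sigma>vadd by auto
    qed
  next
    show "inj_on L (F2vec n)"
    proof (rule inj_onI)
      fix y z assume "L y = L z"
      then have "\<sigma> ` y = \<sigma> ` z"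
        using memL \<sigma>i by (metis (full_types) imageE set_eqI)
      then show "y = z" using inj\<sigma> by (simp add: inj_image_eq_iff)
    qed
  qed
  define c where "c = (if b then {i} else {})"
  have c: "c \<in> F2vec (Suc n)" unfolding c_def F2vec_def using iN by auto
  have cw: "odd (card (c \<inter> w)) = b" unfolding c_def using i by auto
  have Lpar: "even (card (L y \<inter> w))" for y
  proof (cases "par y")
    case True
    then have "L y \<inter> w = insert i (\<sigma> ` y \<inter> w)" unfolding L_def using i by auto
    moreover have "i \<notin> \<sigma> ` y \<inter> w" using \<sigma>i by auto
    ultimately show ?thesis using True fin\<sigma> unfolding par_def by simp
  next
    case False
    then have "L y \<inter> w = \<sigma> ` y \<inter> w" unfolding L_def by auto
    then show ?thesis using False unfolding par_def by simp
  qed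
  have par_add: "odd (card (vadd c x \<inter> w)) \<longleftrightarrow> (b \<noteq> odd (card (x \<inter> w)))" for x
  proof -
    have "vadd c x \<inter> w = symd (c \<inter> w) (x \<inter> w)" unfolding vadd_def symd_def by auto
    then show ?thesis using odd_card_symd[of "c \<inter> w" "x \<inter> w"] fw cw by simp
  qed
  have "(\<lambda>y. vadd c (L y)) ` F2vec n = cos (Suc n) w b"
  proof
    show "(\<lambda>y. vadd c (L y)) ` F2vec n \<subseteq> cos (Suc n) w b"
    proof
      fix x assume "x \<in> (\<lambda>y. vadd c (L y)) ` F2vec n"
      then obtain y where y: "y \<in> F2vec n" "x = vadd c (L y)" by auto
      have "x \<in> F2vec (Suc n)" using y c lin vadd_F2vec unfolding linmap_def by blast
      moreover have "odd (card (x \<inter> w)) = b" using y(2) par_add Lpar by simp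
      ultimately show "x \<in> cos (Suc n) w b" unfolding cos_def by simp
    qed
  next
    show "cos (Suc n) w b \<subseteq> (\<lambda>y. vadd c (L y)) ` F2vec n"
    proof
      fix x assume x: "x \<in> cos (Suc n) w b"
      define x' where "x' = vadd c x"
      have x'F: "x' \<in> F2vec (Suc n)" unfolding x'_def using x c vadd_F2vec unfolding cos_def by blast
      have x'e: "even (card (x' \<inter> w))" unfolding x'_def using par_add[of x] x unfolding cos_def by blast
      define y where "y = {j \<in> {..<n}. \<sigma> j \<in> x'}"
      have yF: "y \<in> F2vec n" unfolding y_def F2vec_def by auto
      have sy: "\<sigma> ` y = x' - {i}"
      proof
        show "\<sigma> ` y \<subseteq> x' - {i}" unfolding y_def using \<sigma>i by auto
      next
        show "x' - {i} \<subseteq> \<sigma> ` y"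
        proof
          fix k assume k: "k \<in> x' - {i}"
          then have kN: "k < Suc n" using x'F unfolding F2vec_def by auto
          show "k \<in> \<sigma> ` y"
          proof (cases "k < i")
            case True
            then have "\<sigma> k = k" "k < n" using iN unfolding \<sigma>_def by auto
            then show ?thesis using k unfolding y_def by (metis (no_types, lifting) DiffD1 image_eqI lessThan_iff mem_Collect_eq)
          next
            case False
            then have ki: "k > i" using k by auto
            then have "\<sigma> (k - 1) = k" "k - 1 < n" using kN unfolding \<sigma>_def by auto
            then show ?thesis using k unfolding y_def by (metis (no_types, lifting) DiffD1 image_eqI lessThan_iff mem_Collect_eq)
          qed
        qed
      qed
      have pary: "par y \<longleftrightarrow> i \<in> x'"
      proof (cases "i \<in> x'")
        case True
        have "x' \<inter> w = insert i ((x' - {i}) \<inter> w)" using True i by auto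
        then have "card (x' \<inter> w) = Suc (card ((x' - {i}) \<inter> w))" using fw by simp
        then show ?thesis using True x'e unfolding par_def sy by simp
      next
        case False
        then have "(x' - {i}) \<inter> w = x' \<inter> w" by auto
        then show ?thesis using False x'e unfolding par_def sy by simp
      qed
      have "L y = x'"
      proof (rule set_eqI)
        fix z show "z \<in> L y \<longleftrightarrow> z \<in> x'" unfolding memL sy pary by auto
      qed
      then have "x = vadd c (L y)" unfolding x'_def by simp
      then show "x \<in> (\<lambda>y. vadd c (L y)) ` F2vec n" using yF by blast
    qed
  qed
  then show ?thesis using lin c by blast
qed


lemma count_via:
  assumes "linmap n N L" "c \<in> F2vec N" "(\<lambda>y. vadd c (L y)) ` F2vec n = K"
  shows "card {Q' \<in> flats N d. Q' \<subseteq> K \<and> P Q'} = card {Q \<in> flats n d. P ((\<lambda>y. vadd c (L y)) ` Q)}"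
proof -
  define \<phi> where "\<phi> = (\<lambda>y. vadd c (L y))"
  have inj\<phi>: "inj_on \<phi> (F2vec n)"
    using assms(1) unfolding linmap_def inj_on_def \<phi>_def by (simp add: vadd_left_cancel)
  have eq: "{Q' \<in> flats N d. Q' \<subseteq> K \<and> P Q'} = (image \<phi>) ` {Q \<in> flats n d. P (\<phi> ` Q)}"
  proof
    show "{Q' \<in> flats N d. Q' \<subseteq> K \<and> P Q'} \<subseteq> (image \<phi>) ` {Q \<in> flats n d. P (\<phi> ` Q)}"
    proof
      fix Q' assume Q': "Q' \<in> {Q' \<in> flats N d. Q' \<subseteq> K \<and> P Q'}"
      then obtain Q where "Q \<in> flats n d" "Q' = \<phi> ` Q"
        using lin_flat_pre[OF assms(1,2), of Q' d] assms(3) unfolding \<phi>_def by auto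
      then show "Q' \<in> (image \<phi>) ` {Q \<in> flats n d. P (\<phi> ` Q)}" using Q' by auto
    qed
  next
    show "(image \<phi>) ` {Q \<in> flats n d. P (\<phi> ` Q)} \<subseteq> {Q' \<in> flats N d. Q' \<subseteq> K \<and> P Q'}"
    proof
      fix Q' assume "Q' \<in> (image \<phi>) ` {Q \<in> flats n d. P (\<phi> ` Q)}"
      then obtain Q where Q: "Q \<in> flats n d" "P (\<phi> ` Q)" "Q' = \<phi> ` Q" by auto
      have "Q' \<in> flats N d" using lin_flat[OF assms(1,2) Q(1)] Q(3) unfolding \<phi>_def by simp
      moreover have "Q' \<subseteq> K" using Q(1,3) flat_sub assms(3) unfolding \<phi>_def by blast
      ultimately show "Q' \<in> {Q' \<in> flats N d. Q' \<subseteq> K \<and> P Q'}" using Q by simp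
    qed
  qed
  have "inj_on (image \<phi>) {Q \<in> flats n d. P (\<phi> ` Q)}"
  proof -
    have "{Q \<in> flats n d. P (\<phi> ` Q)} \<subseteq> Pow (F2vec n)" using flat_sub by blast
    then show ?thesis using inj_on_image_Pow[OF inj\<phi>] inj_on_subset by blast
  qed
  then show ?thesis unfolding eq \<phi>_def[symmetric] by (rule card_image)
qed

lemma coset_count:
  assumes "w \<subseteq> {..<Suc n}" "w \<noteq> {}"
  shows "\<exists>\<phi>. inj_on \<phi> (F2vec n) \<and> \<phi> ` F2vec n \<subseteq> F2vec (Suc n) \<and>
     (\<forall>P. card {Q' \<in> flats (Suc n) d. Q' \<subseteq> cos (Suc n) w b \<and> P Q'} = card {Q \<in> flats n d. P (\<phi> ` Q)})"
proof -
  obtain L c where Lc: "linmap n (Suc n) L" "c \<in> F2vec (Suc n)"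
    "(\<lambda>y. vadd c (L y)) ` F2vec n = cos (Suc n) w b" using coset_iso[OF assms] by blast
  have "inj_on (\<lambda>y. vadd c (L y)) (F2vec n)"
    using Lc(1) unfolding linmap_def inj_on_def by (simp add: vadd_left_cancel)
  moreover have "(\<lambda>y. vadd c (L y)) ` F2vec n \<subseteq> F2vec (Suc n)" using Lc(3) unfolding cos_def by auto
  ultimately show ?thesis using count_via[OF Lc] by blast
qed

lemma chi_eq_iff: "chi w x = chi w y \<longleftrightarrow> (odd (card (x \<inter> w)) = odd (card (y \<inter> w)))"
  unfolding chi_def by auto

lemma pconst_cos:
  assumes "Q \<in> flats N d"
  shows "pconst w Q \<longleftrightarrow> Q \<subseteq> cos N w True \<or> Q \<subseteq> cos N w False"
proof
  assume p: "pconst w Q"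
  obtain x0 where x0: "x0 \<in> Q" using flat_nonempty[OF assms] by auto
  have "\<forall>x\<in>Q. odd (card (x \<inter> w)) = odd (card (x0 \<inter> w))"
    using p x0 unfolding pconst_def chi_eq_iff by blast
  then have "Q \<subseteq> cos N w (odd (card (x0 \<inter> w)))" using flat_sub[OF assms] unfolding cos_def by auto
  then show "Q \<subseteq> cos N w True \<or> Q \<subseteq> cos N w False" by (cases "odd (card (x0 \<inter> w))") auto
next
  assume "Q \<subseteq> cos N w True \<or> Q \<subseteq> cos N w False"
  then show "pconst w Q" unfolding pconst_def chi_eq_iff cos_def by auto
qed

lemma pconst_split:
  assumes "w \<subseteq> {..<Suc n}" "w \<noteq> {}"
  shows "\<exists>\<phi>0 \<phi>1. inj_on \<phi>0 (F2vec n) \<and> \<phi>0 ` F2vec n \<subseteq> F2vec (Suc n) \<and>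
     inj_on \<phi>1 (F2vec n) \<and> \<phi>1 ` F2vec n \<subseteq> F2vec (Suc n) \<and>
     (\<forall>P. card {Q \<in> flats (Suc n) d. P Q \<and> pconst w Q} =
        card {Q \<in> flats n d. P (\<phi>0 ` Q)} + card {Q \<in> flats n d. P (\<phi>1 ` Q)})"
proof -
  obtain \<phi>0 where p0: "inj_on \<phi>0 (F2vec n)" "\<phi>0 ` F2vec n \<subseteq> F2vec (Suc n)"
    "\<And>P. card {Q' \<in> flats (Suc n) d. Q' \<subseteq> cos (Suc n) w False \<and> P Q'} = card {Q \<in> flats n d. P (\<phi>0 ` Q)}"
    using coset_count[OF assms, where b=False and d=d] by blast
  obtain \<phi>1 where p1: "inj_on \<phi>1 (F2vec n)" "\<phi>1 ` F2vec n \<subseteq> F2vec (Suc n)"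
    "\<And>P. card {Q' \<in> flats (Suc n) d. Q' \<subseteq> cos (Suc n) w True \<and> P Q'} = card {Q \<in> flats n d. P (\<phi>1 ` Q)}"
    using coset_count[OF assms, where b=True and d=d] by blast
  have "card {Q \<in> flats (Suc n) d. P Q \<and> pconst w Q} =
        card {Q \<in> flats n d. P (\<phi>0 ` Q)} + card {Q \<in> flats n d. P (\<phi>1 ` Q)}" for P
  proof -
    have e: "{Q \<in> flats (Suc n) d. P Q \<and> pconst w Q} =
      {Q' \<in> flats (Suc n) d. Q' \<subseteq> cos (Suc n) w False \<and> P Q'} \<union>
      {Q' \<in> flats (Suc n) d. Q' \<subseteq> cos (Suc n) w True \<and> P Q'}" using pconst_cos by blast
    have disj: "{Q' \<in> flats (Suc n) d. Q' \<subseteq> cos (Suc n) w False \<and> P Q'} \<inter>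
      {Q' \<in> flats (Suc n) d. Q' \<subseteq> cos (Suc n) w True \<and> P Q'} = {}"
    proof (rule ccontr)
      assume "\<not> ?thesis"
      then obtain Q where Q: "Q \<in> flats (Suc n) d" "Q \<subseteq> cos (Suc n) w False" "Q \<subseteq> cos (Suc n) w True" by blast
      obtain x where "x \<in> Q" using flat_nonempty[OF Q(1)] by auto
      then show False using Q unfolding cos_def by auto
    qed
    have "card {Q \<in> flats (Suc n) d. P Q \<and> pconst w Q} =
      card {Q' \<in> flats (Suc n) d. Q' \<subseteq> cos (Suc n) w False \<and> P Q'} +
      card {Q' \<in> flats (Suc n) d. Q' \<subseteq> cos (Suc n) w True \<and> P Q'}"
      unfolding e by (rule card_Un_disjoint) (use disj in auto)
    then show ?thesis using p0(3) p1(3) by simp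
  qed
  then show ?thesis using p0(1,2) p1(1,2) by blast
qed

lemma double_count:
  shows "(\<Sum>w\<in>Pow {..<N} - {{}}. card {Q \<in> flats N d. P Q \<and> pconst w Q}) =
     card {Q \<in> flats N d. P Q} * (2 ^ (N - d) - 1)"
proof -
  let ?W = "Pow {..<N} - {{}}"
  have fW: "finite ?W" by simp
  have "(\<Sum>w\<in>?W. card {Q \<in> flats N d. P Q \<and> pconst w Q}) =
        (\<Sum>w\<in>?W. \<Sum>Q\<in>{Q \<in> flats N d. P Q}. if pconst w Q then 1 else 0)"
  proof (rule sum.cong)
    fix w
    have "card {Q \<in> flats N d. P Q \<and> pconst w Q} = card {Q \<in> {Q \<in> flats N d. P Q}. pconst w Q}"
      by (rule arg_cong[where f=card]) auto
    then show "card {Q \<in> flats N d. P Q \<and> pconst w Q} =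
        (\<Sum>Q\<in>{Q \<in> flats N d. P Q}. if pconst w Q then 1 else 0)"
      by (simp add: sum.inter_filter[symmetric])
  qed simp
  also have "\<dots> = (\<Sum>Q\<in>{Q \<in> flats N d. P Q}. \<Sum>w\<in>?W. if pconst w Q then 1 else 0)"
    by (rule sum.swap)
  also have "\<dots> = (\<Sum>Q\<in>{Q \<in> flats N d. P Q}. 2 ^ (N - d) - 1)"
  proof (rule sum.cong)
    fix Q assume "Q \<in> {Q \<in> flats N d. P Q}"
    then have Q: "Q \<in> flats N d" by simp
    have "(\<Sum>w\<in>?W. if pconst w Q then 1 else 0) = card {w \<in> ?W. pconst w Q}"
      by (simp add: sum.inter_filter[symmetric])
    also have "{w \<in> ?W. pconst w Q} = {w \<in> Pow {..<N}. pconst w Q} - {{}}" by auto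
    also have "card \<dots> = card {w \<in> Pow {..<N}. pconst w Q} - 1"
    proof (rule card_Diff_singleton)
      show "{} \<in> {w \<in> Pow {..<N}. pconst w Q}" unfolding pconst_def by simp
    qed
    also have "\<dots> = 2 ^ (N - d) - 1" using pconst_count[OF Q] by simp
    finally show "(\<Sum>w\<in>?W. if pconst w Q then 1 else 0) = (2::nat) ^ (N - d) - 1" .
  qed simp
  also have "\<dots> = card {Q \<in> flats N d. P Q} * (2 ^ (N - d) - 1)" by simp
  finally show ?thesis .
qed


lemma card_W: "card (Pow {..<N} - {{}}) = 2 ^ N - 1"
  by (simp add: card_Pow)

lemma total_identity:
  "card (flats (Suc n) d) * (2 ^ (Suc n - d) - 1) = (2 ^ Suc n - 1) * (2 * card (flats n d))"
proof -
  let ?W = "Pow {..<Suc n} - {{}}"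
  have "card (flats (Suc n) d) * (2 ^ (Suc n - d) - 1) =
        (\<Sum>w\<in>?W. card {Q \<in> flats (Suc n) d. True \<and> pconst w Q})"
    using double_count[where P="\<lambda>_. True" and N="Suc n" and d=d] by simp
  also have "\<dots> = (\<Sum>w\<in>?W. 2 * card (flats n d))"
  proof (rule sum.cong)
    fix w assume "w \<in> ?W"
    then have w: "w \<subseteq> {..<Suc n}" "w \<noteq> {}" by auto
    from pconst_split[OF w, where d=d] obtain \<phi>0 \<phi>1 where
      "\<forall>P. card {Q \<in> flats (Suc n) d. P Q \<and> pconst w Q} =
        card {Q \<in> flats n d. P (\<phi>0 ` Q)} + card {Q \<in> flats n d. P (\<phi>1 ` Q)}" by (elim exE conjE) (rule that; assumption)
    from this[rule_format, of "\<lambda>_. True"]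
    show "card {Q \<in> flats (Suc n) d. True \<and> pconst w Q} = 2 * card (flats n d)" by simp
  qed simp
  also have "\<dots> = (2 ^ Suc n - 1) * (2 * card (flats n d))" using card_W[of "Suc n"] by simp
  finally show ?thesis .
qed

lemma bad_bound:
  assumes "w \<subseteq> {..<Suc n}" "w \<noteq> {}"
  shows "card {Q \<in> flats (Suc n) d. pconst w Q} * 2 ^ d \<le> card (flats (Suc n) d)"
proof -
  from pconst_split[OF assms, where d=d] obtain \<phi>0 \<phi>1 where
    "\<forall>P. card {Q \<in> flats (Suc n) d. P Q \<and> pconst w Q} =
      card {Q \<in> flats n d. P (\<phi>0 ` Q)} + card {Q \<in> flats n d. P (\<phi>1 ` Q)}" by (elim exE conjE) (rule that; assumption)
  from this[rule_format, of "\<lambda>_. True"]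
  have c: "card {Q \<in> flats (Suc n) d. pconst w Q} = 2 * card (flats n d)" by simp
  define F where "F = card (flats (Suc n) d)"
  define N where "N = Suc n"
  have ti: "F * (2 ^ (N - d) - 1) = (2 ^ N - 1) * card {Q \<in> flats (Suc n) d. pconst w Q}"
    unfolding F_def N_def c by (rule total_identity)
  have le: "(2 ^ (N - d) - 1) * 2 ^ d \<le> (2::nat) ^ N - 1"
  proof (cases "d \<le> N")
    case True
    have "(2 ^ (N - d) - 1) * 2 ^ d = (2::nat) ^ (N - d) * 2 ^ d - 2 ^ d"
      by (simp only: diff_mult_distrib mult_1)
    also have "(2::nat) ^ (N - d) * 2 ^ d = 2 ^ (N - d + d)" by (simp only: power_add)
    also have "N - d + d = N" using True by simp
    finally have "(2 ^ (N - d) - 1) * 2 ^ d = (2::nat) ^ N - 2 ^ d" .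
    moreover have "(1::nat) \<le> 2 ^ d" by simp
    ultimately show ?thesis by linarith
  next
    case False
    then show ?thesis by simp
  qed
  have "(2 ^ N - 1) * (card {Q \<in> flats (Suc n) d. pconst w Q} * 2 ^ d) = F * ((2 ^ (N - d) - 1) * 2 ^ d)"
    by (simp only: mult.assoc[symmetric] ti[symmetric])
  also have "\<dots> \<le> F * (2 ^ N - 1)" using le by (rule mult_le_mono2)
  also have "\<dots> = (2 ^ N - 1) * F" by (rule mult.commute)
  finally have ineq: "(2 ^ N - 1) * (card {Q \<in> flats (Suc n) d. pconst w Q} * 2 ^ d) \<le> (2 ^ N - 1) * F" .
  have "(1::nat) < 2 ^ N" unfolding N_def by (rule one_less_power) auto
  then have pos: "(0::nat) < 2 ^ N - 1" by linarith
  show ?thesis using ineq pos unfolding F_def by (simp only: mult_le_cancel1)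
qed

lemma lam_A_le_lam_n:
  assumes "A \<in> Pow (F2vec n)"
  shows "lam_A n d s A \<le> lam_n n d s"
  unfolding lam_n_def by (rule Max_ge) (use assms in auto)

lemma lam_n_le:
  assumes "\<And>A. A \<in> Pow (F2vec n) \<Longrightarrow> lam_A n d s A \<le> c"
  shows "lam_n n d s \<le> c"
  unfolding lam_n_def by (rule Max.boundedI) (use assms in auto)

lemma pullback_count:
  assumes "inj_on \<phi> (F2vec n)" "\<phi> ` F2vec n \<subseteq> F2vec N"
  shows "real (card {Q \<in> flats n d. card (\<phi> ` Q \<inter> A) = s}) \<le> lam_n n d s * real (card (flats n d))"
proof (cases "flats n d = {}")
  case True
  then show ?thesis by simp
next
  case False
  define A' where "A' = {y \<in> F2vec n. \<phi> y \<in> A}"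
  have "card (\<phi> ` Q \<inter> A) = card (Q \<inter> A')" if "Q \<in> flats n d" for Q
  proof -
    have Qs: "Q \<subseteq> F2vec n" using flat_sub[OF that] .
    have e1: "\<phi> ` Q \<inter> A = \<phi> ` (Q \<inter> A')"
    proof
      show "\<phi> ` Q \<inter> A \<subseteq> \<phi> ` (Q \<inter> A')" using Qs unfolding A'_def by auto
      show "\<phi> ` (Q \<inter> A') \<subseteq> \<phi> ` Q \<inter> A" unfolding A'_def by auto
    qed
    have "inj_on \<phi> (Q \<inter> A')" by (rule inj_on_subset[OF assms(1)]) (use Qs in blast)
    then have "card (\<phi> ` (Q \<inter> A')) = card (Q \<inter> A')" by (rule card_image)
    then show ?thesis by (simp only: e1)
  qed
  then have e: "{Q \<in> flats n d. card (\<phi> ` Q \<inter> A) = s} = {Q \<in> flats n d. card (Q \<inter> A') = s}" by auto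
  have pos: "real (card (flats n d)) > 0" using False by (simp add: card_gt_0_iff)
  have "lam_A n d s A' \<le> lam_n n d s" by (rule lam_A_le_lam_n) (auto simp: A'_def)
  then show ?thesis unfolding e lam_A_def by (simp only: pos_divide_le_eq[OF pos])
qed

lemma monotone_step:
  assumes "d \<le> n"
  shows "lam_n (Suc n) d s \<le> lam_n n d s"
proof (rule lam_n_le)
  fix A assume A: "A \<in> Pow (F2vec (Suc n))"
  let ?W = "Pow {..<Suc n} - {{}}"
  let ?G = "{Q \<in> flats (Suc n) d. card (Q \<inter> A) = s}"
  define lam where "lam = lam_n n d s"
  define F where "F = real (card (flats n d))"
  have "real (card ?G * (2 ^ (Suc n - d) - 1)) =
        real (\<Sum>w\<in>?W. card {Q \<in> flats (Suc n) d. card (Q \<inter> A) = s \<and> pconst w Q})"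
    using double_count[where P="\<lambda>Q. card (Q \<inter> A) = s" and N="Suc n" and d=d] by simp
  also have "\<dots> = (\<Sum>w\<in>?W. real (card {Q \<in> flats (Suc n) d. card (Q \<inter> A) = s \<and> pconst w Q}))"
    by simp
  also have "\<dots> \<le> (\<Sum>w\<in>?W. 2 * lam * F)"
  proof (rule sum_mono)
    fix w assume "w \<in> ?W"
    then have w: "w \<subseteq> {..<Suc n}" "w \<noteq> {}" by auto
    from pconst_split[OF w, where d=d] obtain \<phi>0 \<phi>1 where
      p: "inj_on \<phi>0 (F2vec n)" "\<phi>0 ` F2vec n \<subseteq> F2vec (Suc n)"
      "inj_on \<phi>1 (F2vec n)" "\<phi>1 ` F2vec n \<subseteq> F2vec (Suc n)"
      "\<forall>P. card {Q \<in> flats (Suc n) d. P Q \<and> pconst w Q} =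
        card {Q \<in> flats n d. P (\<phi>0 ` Q)} + card {Q \<in> flats n d. P (\<phi>1 ` Q)}" by (elim exE conjE) (rule that; assumption)
    have "card {Q \<in> flats (Suc n) d. card (Q \<inter> A) = s \<and> pconst w Q} =
      card {Q \<in> flats n d. card (\<phi>0 ` Q \<inter> A) = s} + card {Q \<in> flats n d. card (\<phi>1 ` Q \<inter> A) = s}"
      using p(5)[rule_format, of "\<lambda>Q. card (Q \<inter> A) = s"] by simp
    moreover have "real (card {Q \<in> flats n d. card (\<phi>0 ` Q \<inter> A) = s}) \<le> lam * F"
      unfolding lam_def F_def by (rule pullback_count[OF p(1,2)])
    moreover have "real (card {Q \<in> flats n d. card (\<phi>1 ` Q \<inter> A) = s}) \<le> lam * F"
      unfolding lam_def F_def by (rule pullback_count[OF p(3,4)])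
    ultimately show "real (card {Q \<in> flats (Suc n) d. card (Q \<inter> A) = s \<and> pconst w Q}) \<le> 2 * lam * F"
      by simp
  qed
  also have "\<dots> = lam * (real (2 ^ Suc n - 1) * (2 * F))" using card_W[of "Suc n"] by simp
  also have "\<dots> = lam * real (card (flats (Suc n) d) * (2 ^ (Suc n - d) - 1))"
    using total_identity[of n d] unfolding F_def by (metis of_nat_mult of_nat_numeral)
  finally have ineq: "real (card ?G) * real (2 ^ (Suc n - d) - 1 :: nat) \<le>
      (lam * real (card (flats (Suc n) d))) * real (2 ^ (Suc n - d) - 1 :: nat)"
    by (simp add: mult.assoc)
  have "(1::nat) < 2 ^ (Suc n - d)" using assms by (intro one_less_power) auto
  then have "(0::nat) < 2 ^ (Suc n - d) - 1" by linarith
  then have "real (2 ^ (Suc n - d) - 1 :: nat) > 0" by (simp only: of_nat_0_less_iff)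
  then have "real (card ?G) \<le> lam * real (card (flats (Suc n) d))"
    using ineq by (simp add: mult_le_cancel_right)
  moreover have "real (card (flats (Suc n) d)) > 0"
    using flats_nonempty[of d "Suc n"] assms by (simp add: card_gt_0_iff)
  ultimately show "lam_A (Suc n) d s A \<le> lam_n n d s"
    unfolding lam_A_def lam_def by (simp add: divide_le_eq mult.commute)
qed


definition good :: "nat \<Rightarrow> nat set set \<Rightarrow> bool" where
  "good m Q \<longleftrightarrow> (\<forall>w \<in> Pow {..<m} - {{}}. \<not> pconst w Q)"

lemma fiber_count:
  assumes Q: "Q \<in> flats n d" and g: "good m Q" and y: "y \<subseteq> {..<m}"
  shows "card {x \<in> Q. x \<inter> {..<m} = y} * 2 ^ m = 2 ^ d"
proof -
  obtain x0 U where u: "x0 \<in> F2vec n" "U \<subseteq> F2vec n" "finite U" "card U = 2 ^ d" "{} \<in> U"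
    "\<And>u v. u \<in> U \<Longrightarrow> v \<in> U \<Longrightarrow> vadd u v \<in> U" "Q = vadd x0 ` U" using flatE[OF Q] by metis
  have fQ: "finite Q" using flat_finite[OF Q] .
  have fy: "finite y" using y finite_subset by blast
  have fx: "finite x" if "x \<in> Q" for x using that flat_sub[OF Q] F2vec_finite_elem by blast
  have fw: "finite w" if "w \<in> Pow {..<m}" for w using that finite_subset by blast
  have ind: "(if x \<inter> {..<m} = y then (2::real) ^ m else 0) = (\<Sum>w\<in>Pow {..<m}. chi w x * chi w y)"
    if "x \<in> Q" for x
  proof -
    have "(\<Sum>w\<in>Pow {..<m}. chi w x * chi w y) = (\<Sum>w\<in>Pow {..<m}. chi w (vadd x y))"
      by (rule sum.cong) (auto simp: chi_vadd fw)
    also have "\<dots> = (if vadd x y \<inter> {..<m} = {} then 2 ^ m else 0)"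
      by (rule chi_sum_w) (simp add: vadd_def fx[OF that] fy)
    also have "(vadd x y \<inter> {..<m} = {}) \<longleftrightarrow> (x \<inter> {..<m} = y)" using y unfolding vadd_def by auto
    finally show ?thesis by simp
  qed
  have inner: "(\<Sum>x\<in>Q. chi w x) = (if w = {} then 2 ^ d else 0)" if w: "w \<in> Pow {..<m}" for w
  proof (cases "w = {}")
    case True
    then show ?thesis using flat_card[OF Q] by simp
  next
    case False
    then have np: "\<not> pconst w Q" using g w unfolding good_def by blast
    have nall: "\<not> (\<forall>u\<in>U. chi w u = 1)" using np pconst_iff[OF fw[OF w] u(5,7)] by simp
    have "(\<Sum>x\<in>Q. chi w x) = chi w x0 * (if \<forall>u\<in>U. chi w u = 1 then real (card U) else 0)"
      by (rule flat_chi_sum[OF fw[OF w] u(3,6,7)])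
    also have "\<dots> = 0" by (simp only: if_not_P[OF nall] mult_zero_right)
    finally show ?thesis using False by simp
  qed
  have "real (card {x \<in> Q. x \<inter> {..<m} = y}) * 2 ^ m = (\<Sum>x\<in>Q. if x \<inter> {..<m} = y then (2::real) ^ m else 0)"
    using fQ by (simp add: sum.If_cases Collect_conj_eq[symmetric] Int_def)
  also have "\<dots> = (\<Sum>x\<in>Q. \<Sum>w\<in>Pow {..<m}. chi w x * chi w y)" by (rule sum.cong) (auto simp: ind)
  also have "\<dots> = (\<Sum>w\<in>Pow {..<m}. \<Sum>x\<in>Q. chi w x * chi w y)" by (rule sum.swap)
  also have "\<dots> = (\<Sum>w\<in>Pow {..<m}. chi w y * (\<Sum>x\<in>Q. chi w x))"
    by (simp add: sum_distrib_left mult.commute)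
  also have "\<dots> = (\<Sum>w\<in>Pow {..<m}. if w = {} then 2 ^ d else 0)"
    by (rule sum.cong) (auto simp: inner)
  also have "\<dots> = 2 ^ d" by (simp add: sum.delta)
  finally have "real (card {x \<in> Q. x \<inter> {..<m} = y} * 2 ^ m) = real (2 ^ d)" by simp
  then show ?thesis by (simp only: of_nat_eq_iff)
qed

lemma good_inter_card:
  assumes Q: "Q \<in> flats n d" and g: "good m Q" and S: "S \<subseteq> Pow {..<m}" and md: "m \<le> d"
  shows "card (Q \<inter> {x \<in> F2vec n. x \<inter> {..<m} \<in> S}) = card S * 2 ^ (d - m)"
proof -
  have fQ: "finite Q" using flat_finite[OF Q] .
  have fS: "finite S" using S finite_subset by (metis finite_Pow_iff finite_lessThan)
  have e: "Q \<inter> {x \<in> F2vec n. x \<inter> {..<m} \<in> S} = (\<Union>y\<in>S. {x \<in> Q. x \<inter> {..<m} = y})"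
    using flat_sub[OF Q] by auto
  have "card (\<Union>y\<in>S. {x \<in> Q. x \<inter> {..<m} = y}) = (\<Sum>y\<in>S. card {x \<in> Q. x \<inter> {..<m} = y})"
    by (rule card_UN_disjoint) (use fS fQ in auto)
  also have "\<dots> = (\<Sum>y\<in>S. 2 ^ (d - m))"
  proof (rule sum.cong)
    fix y assume "y \<in> S"
    then have "card {x \<in> Q. x \<inter> {..<m} = y} * 2 ^ m = 2 ^ d" using fiber_count[OF Q g] S by blast
    moreover have "(2::nat) ^ d = 2 ^ (d - m) * 2 ^ m" using md by (simp add: power_add[symmetric])
    ultimately show "card {x \<in> Q. x \<inter> {..<m} = y} = 2 ^ (d - m)" by simp
  qed simp
  finally show ?thesis using e by simp
qed

lemma good_count:
  assumes "m \<le> Suc n"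
  shows "real (card {Q \<in> flats (Suc n) d. good m Q}) * 2 ^ d \<ge>
         real (card (flats (Suc n) d)) * (2 ^ d - (2 ^ m - 1))"
proof -
  let ?F = "flats (Suc n) d"
  let ?Wm = "Pow {..<m} - {{}}"
  have sub: "?F - {Q \<in> ?F. good m Q} \<subseteq> (\<Union>w\<in>?Wm. {Q \<in> ?F. pconst w Q})"
    unfolding good_def by blast
  have "card (?F - {Q \<in> ?F. good m Q}) \<le> card (\<Union>w\<in>?Wm. {Q \<in> ?F. pconst w Q})"
    by (rule card_mono[OF _ sub]) simp
  also have "\<dots> \<le> (\<Sum>w\<in>?Wm. card {Q \<in> ?F. pconst w Q})" by (rule card_UN_le) simp
  finally have b0: "card (?F - {Q \<in> ?F. good m Q}) \<le> (\<Sum>w\<in>?Wm. card {Q \<in> ?F. pconst w Q})" .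
  have b1: "card (?F - {Q \<in> ?F. good m Q}) * 2 ^ d \<le> (\<Sum>w\<in>?Wm. card {Q \<in> ?F. pconst w Q} * 2 ^ d)"
    using mult_le_mono1[OF b0, of "2 ^ d"] by (simp add: sum_distrib_right)
  have "(\<Sum>w\<in>?Wm. card {Q \<in> ?F. pconst w Q} * 2 ^ d) \<le> (\<Sum>w\<in>?Wm. card ?F)"
  proof (rule sum_mono)
    fix w assume "w \<in> ?Wm"
    then have "w \<subseteq> {..<Suc n}" "w \<noteq> {}" using assms by auto
    then show "card {Q \<in> ?F. pconst w Q} * 2 ^ d \<le> card ?F" by (rule bad_bound)
  qed
  also have "\<dots> = (2 ^ m - 1) * card ?F" using card_W[of m] by simp
  finally have b2: "card (?F - {Q \<in> ?F. good m Q}) * 2 ^ d \<le> (2 ^ m - 1) * card ?F" using b1 by linarith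
  have cs: "card (?F - {Q \<in> ?F. good m Q}) = card ?F - card {Q \<in> ?F. good m Q}"
    by (rule card_Diff_subset) auto
  have le: "card {Q \<in> ?F. good m Q} \<le> card ?F" by (rule card_mono) auto
  have r: "(real (card ?F) - real (card {Q \<in> ?F. good m Q})) * 2 ^ d \<le> (2 ^ m - 1) * real (card ?F)"
  proof -
    have "real (card (?F - {Q \<in> ?F. good m Q}) * 2 ^ d) \<le> real ((2 ^ m - 1) * card ?F)"
      using b2 by (simp only: of_nat_le_iff)
    moreover have "real (card (?F - {Q \<in> ?F. good m Q})) = real (card ?F) - real (card {Q \<in> ?F. good m Q})"
      using cs le by simp
    moreover have "real ((2::nat) ^ m - 1) = 2 ^ m - 1" by (simp add: of_nat_diff)
    ultimately show ?thesis by simp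
  qed
  then show ?thesis by (simp add: algebra_simps)
qed


definition wt :: "real \<Rightarrow> 'a set \<Rightarrow> 'a set \<Rightarrow> real" where
  "wt p C R = p ^ card R * (1 - p) ^ card (C - R)"

lemma marg:
  assumes "finite T" "finite D" "T \<inter> D = {}"
  shows "(\<Sum>R\<in>Pow (T \<union> D). wt p (T \<union> D) R * f (R \<inter> T)) = (\<Sum>R\<in>Pow T. wt p T R * f R)"
  using assms(2,3)
proof (induction D rule: finite_induct)
  case empty
  have "R \<inter> T = R" if "R \<in> Pow T" for R using that by auto
  then show ?case by simp
next
  case (insert x D)
  let ?C = "T \<union> D"
  have xC: "x \<notin> ?C" and xT: "x \<notin> T" using insert by auto
  have fC: "finite ?C" using assms(1) insert by simp
  have IH: "(\<Sum>R\<in>Pow ?C. wt p ?C R * f (R \<inter> T)) = (\<Sum>R\<in>Pow T. wt p T R * f R)"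
    using insert by auto
  have eqC: "T \<union> insert x D = insert x ?C" by auto
  have w1: "wt p (insert x ?C) R = (1 - p) * wt p ?C R" if "R \<in> Pow ?C" for R
  proof -
    have "insert x ?C - R = insert x (?C - R)" using that xC by auto
    moreover have "finite (?C - R)" using fC by simp
    moreover have "x \<notin> ?C - R" using xC by simp
    ultimately have "card (insert x ?C - R) = Suc (card (?C - R))" by simp
    then show ?thesis unfolding wt_def by simp
  qed
  have w2: "wt p (insert x ?C) (insert x R) = p * wt p ?C R" if "R \<in> Pow ?C" for R
  proof -
    have "insert x ?C - insert x R = ?C - R" using that xC by auto
    moreover have "card (insert x R) = Suc (card R)" using that xC fC finite_subset by (metis PowD card_insert_disjoint subsetD)
    ultimately show ?thesis unfolding wt_def by simp
  qed
  have i2: "insert x R \<inter> T = R \<inter> T" for R using xT by auto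
  have dis: "Pow ?C \<inter> insert x ` Pow ?C = {}" using xC by auto
  have inj: "inj_on (insert x) (Pow ?C)"
  proof (rule inj_onI)
    fix A B assume AB: "A \<in> Pow ?C" "B \<in> Pow ?C" "insert x A = insert x B"
    have "x \<notin> A" "x \<notin> B" using AB(1,2) xC by auto
    then show "A = B" using AB(3) insert_ident by metis
  qed
  have "(\<Sum>R\<in>Pow (insert x ?C). wt p (insert x ?C) R * f (R \<inter> T)) =
        (\<Sum>R\<in>Pow ?C. wt p (insert x ?C) R * f (R \<inter> T)) +
        (\<Sum>R\<in>insert x ` Pow ?C. wt p (insert x ?C) R * f (R \<inter> T))"
    unfolding Pow_insert by (rule sum.union_disjoint) (use fC dis in auto)
  also have "(\<Sum>R\<in>insert x ` Pow ?C. wt p (insert x ?C) R * f (R \<inter> T)) =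
        (\<Sum>R\<in>Pow ?C. wt p (insert x ?C) (insert x R) * f (insert x R \<inter> T))"
    by (rule sum.reindex[OF inj, unfolded comp_def])
  also have "\<dots> = (\<Sum>R\<in>Pow ?C. p * (wt p ?C R * f (R \<inter> T)))"
    by (rule sum.cong) (auto simp: w2 i2)
  also have "(\<Sum>R\<in>Pow ?C. wt p (insert x ?C) R * f (R \<inter> T)) = (\<Sum>R\<in>Pow ?C. (1 - p) * (wt p ?C R * f (R \<inter> T)))"
    by (rule sum.cong) (auto simp: w1)
  also have "(\<Sum>R\<in>Pow ?C. (1 - p) * (wt p ?C R * f (R \<inter> T))) + (\<Sum>R\<in>Pow ?C. p * (wt p ?C R * f (R \<inter> T)))
      = (\<Sum>R\<in>Pow ?C. wt p ?C R * f (R \<inter> T))"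
    unfolding sum.distrib[symmetric] by (rule sum.cong) (auto simp: algebra_simps)
  finally show ?case unfolding eqC IH .
qed

lemma wt_total:
  assumes "finite C"
  shows "(\<Sum>R\<in>Pow C. wt p C R) = 1"
  using marg[of "{}" C p "\<lambda>_. 1"] assms by (simp add: wt_def)

lemma one_hit:
  assumes "finite T" "card T = M"
  shows "(\<Sum>R\<in>Pow T. wt p T R * (if card R = 1 then 1 else 0)) = real M * p * (1 - p) ^ (M - 1)"
proof -
  have "(\<Sum>R\<in>Pow T. wt p T R * (if card R = 1 then 1 else 0)) = (\<Sum>R\<in>{R \<in> Pow T. card R = 1}. wt p T R)"
    using assms(1) by (simp add: sum.inter_filter[symmetric] if_distrib cong: if_cong)
  also have "{R \<in> Pow T. card R = 1} = (\<lambda>x. {x}) ` T" by (auto simp: card_Suc_eq)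
  also have "(\<Sum>R\<in>(\<lambda>x. {x}) ` T. wt p T R) = (\<Sum>x\<in>T. wt p T {x})"
    by (rule sum.reindex[unfolded comp_def]) (simp add: inj_on_def)
  also have "\<dots> = (\<Sum>x\<in>T. p * (1 - p) ^ (M - 1))"
  proof (rule sum.cong)
    fix x assume "x \<in> T"
    then have "card (T - {x}) = M - 1" using assms by simp
    then show "wt p T {x} = p * (1 - p) ^ (M - 1)" unfolding wt_def by simp
  qed simp
  also have "\<dots> = real M * p * (1 - p) ^ (M - 1)" using assms by simp
  finally show ?thesis .
qed

lemma averaging:
  fixes p :: real and M :: nat
  assumes C: "finite C" and G: "finite G" and T: "\<And>Q. Q \<in> G \<Longrightarrow> T Q \<subseteq> C \<and> card (T Q) = M"
    and p: "0 \<le> p" "p \<le> 1"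
  shows "\<exists>R \<subseteq> C. real (card {Q \<in> G. card (R \<inter> T Q) = 1}) \<ge> real (card G) * (real M * p * (1 - p) ^ (M - 1))"
proof -
  define h where "h R = real (card {Q \<in> G. card (R \<inter> T Q) = 1})" for R
  define V where "V = real (card G) * (real M * p * (1 - p) ^ (M - 1))"
  have wpos: "wt p C R \<ge> 0" for R unfolding wt_def using p by simp
  have "(\<Sum>R\<in>Pow C. wt p C R * h R) = (\<Sum>R\<in>Pow C. \<Sum>Q\<in>G. wt p C R * (if card (R \<inter> T Q) = 1 then 1 else 0))"
  proof (rule sum.cong)
    fix R
    have "h R = (\<Sum>Q\<in>G. (if card (R \<inter> T Q) = 1 then 1 else 0))"
      unfolding h_def using G by (simp add: sum.If_cases Int_def)
    then show "wt p C R * h R = (\<Sum>Q\<in>G. wt p C R * (if card (R \<inter> T Q) = 1 then 1 else 0))"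
      by (simp add: sum_distrib_left)
  qed simp
  also have "\<dots> = (\<Sum>Q\<in>G. \<Sum>R\<in>Pow C. wt p C R * (if card (R \<inter> T Q) = 1 then 1 else 0))"
    by (rule sum.swap)
  also have "\<dots> = (\<Sum>Q\<in>G. real M * p * (1 - p) ^ (M - 1))"
  proof (rule sum.cong)
    fix Q assume Q: "Q \<in> G"
    have TQ: "T Q \<subseteq> C" "card (T Q) = M" using T[OF Q] by auto
    have fT: "finite (T Q)" using TQ(1) C finite_subset by blast
    have CU: "C = T Q \<union> (C - T Q)" using TQ(1) by auto
    have "(\<Sum>R\<in>Pow C. wt p C R * (if card (R \<inter> T Q) = 1 then 1 else 0)) =
          (\<Sum>R\<in>Pow (T Q \<union> (C - T Q)). wt p (T Q \<union> (C - T Q)) R * (if card (R \<inter> T Q) = 1 then 1 else 0))"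
      using CU by simp
    also have "\<dots> = (\<Sum>R\<in>Pow (T Q). wt p (T Q) R * (if card R = 1 then 1 else 0))"
      by (rule marg[where f="\<lambda>R. if card R = 1 then 1 else 0"]) (use fT C in auto)
    also have "\<dots> = real M * p * (1 - p) ^ (M - 1)" by (rule one_hit[OF fT TQ(2)])
    finally show "(\<Sum>R\<in>Pow C. wt p C R * (if card (R \<inter> T Q) = 1 then 1 else 0)) = real M * p * (1 - p) ^ (M - 1)" .
  qed simp
  also have "\<dots> = V" unfolding V_def by simp
  finally have avg: "(\<Sum>R\<in>Pow C. wt p C R * h R) = V" .
  define mx where "mx = Max (h ` Pow C)"
  have mxin: "mx \<in> h ` Pow C" unfolding mx_def by (rule Max_in) (use C in auto)
  have mxge: "h R \<le> mx" if "R \<in> Pow C" for R unfolding mx_def by (rule Max_ge) (use C that in auto)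
  have "V \<le> (\<Sum>R\<in>Pow C. wt p C R * mx)"
    unfolding avg[symmetric] by (rule sum_mono) (use mxge wpos in \<open>auto intro: mult_left_mono\<close>)
  also have "\<dots> = mx" using wt_total[OF C, of p] by (simp add: sum_distrib_right[symmetric])
  finally have "V \<le> mx" .
  then obtain R where "R \<in> Pow C" "V \<le> h R" using mxin by auto
  then show ?thesis unfolding h_def V_def by auto
qed

lemma poisson_bound:
  assumes "M \<ge> (1::nat)"
  shows "real M * (1 / real M) * (1 - 1 / real M) ^ (M - 1) \<ge> exp (-1)"
proof -
  have Mpos: "real M > 0" using assms by simp
  have "real M * (1 / real M) = 1" using Mpos by simp
  show ?thesis
  proof (cases "M = 1")
    case True
    then show ?thesis by simp
  next
    case False
    then have M2: "M \<ge> 2" using assms by simp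
    define x where "x = 1 / (real M - 1)"
    have x: "x > 0" unfolding x_def using M2 by simp
    have e: "1 - 1 / real M = 1 / (1 + x)"
      unfolding x_def using M2 by (simp add: field_simps)
    have "(1 + x) ^ (M - 1) \<le> exp x ^ (M - 1)"
      by (rule power_mono) (use x exp_ge_add_one_self[of x] in auto)
    also have "\<dots> = exp (real (M - 1) * x)" by (simp add: exp_of_nat_mult)
    also have "real (M - 1) * x = 1" unfolding x_def using M2 by (simp add: of_nat_diff)
    finally have b: "(1 + x) ^ (M - 1) \<le> exp 1" .
    have "(1 - 1 / real M) ^ (M - 1) = 1 / (1 + x) ^ (M - 1)" unfolding e by (simp add: power_one_over)
    also have "\<dots> \<ge> 1 / exp 1" using b x by (intro divide_left_mono) auto
    finally have "(1 - 1 / real M) ^ (M - 1) \<ge> exp (-1)" by (simp add: exp_minus field_simps)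
    then show ?thesis using Mpos by simp
  qed
qed


lemma lim_bound:
  fixes f :: "nat \<Rightarrow> real"
  assumes "\<And>n. n \<ge> d \<Longrightarrow> f (Suc n) \<le> f n" "\<And>n. n \<ge> d \<Longrightarrow> c \<le> f n"
  shows "c \<le> lim f"
proof -
  define g where "g i = f (i + d)" for i
  have "decseq g" unfolding g_def by (rule decseq_SucI) (simp add: assms(1))
  moreover have "\<forall>i. c \<le> g i" unfolding g_def using assms(2) by simp
  ultimately obtain L where L: "g \<longlonglongrightarrow> L" by (rule decseq_convergent)
  have "f \<longlonglongrightarrow> L" using L unfolding g_def by (rule LIMSEQ_offset)
  then have "lim f = L" by (rule limI)
  moreover have "c \<le> L" using L by (rule LIMSEQ_le_const) (use \<open>\<forall>i. c \<le> g i\<close> in auto)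
  ultimately show ?thesis by simp
qed

lemma lower_from_count:
  assumes G: "G \<subseteq> flats n d" and ne: "flats n d \<noteq> {}"
    and Gc: "real (card G) \<ge> real (card (flats n d)) * \<beta>"
    and A: "A \<in> Pow (F2vec n)"
    and H: "real (card {Q \<in> G. P Q}) \<ge> real (card G) * \<alpha>"
    and PA: "\<And>Q. Q \<in> G \<Longrightarrow> P Q \<Longrightarrow> card (Q \<inter> A) = t"
    and \<alpha>: "\<alpha> \<ge> 0"
  shows "lam_n n d t \<ge> \<alpha> * \<beta>"
proof -
  let ?F = "real (card (flats n d))"
  have Fpos: "?F > 0" using ne by (simp add: card_gt_0_iff)
  have sub: "{Q \<in> G. P Q} \<subseteq> {Q \<in> flats n d. card (Q \<inter> A) = t}" using G PA by auto
  have "real (card {Q \<in> G. P Q}) \<le> real (card {Q \<in> flats n d. card (Q \<inter> A) = t})"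
    by (rule of_nat_mono[OF card_mono[OF _ sub]]) simp
  moreover have "real (card G) * \<alpha> \<ge> ?F * \<beta> * \<alpha>" using Gc \<alpha> by (rule mult_right_mono)
  ultimately have "?F * (\<alpha> * \<beta>) \<le> real (card {Q \<in> flats n d. card (Q \<inter> A) = t})"
    using H by (simp add: algebra_simps)
  then have "\<alpha> * \<beta> \<le> lam_A n d t A" unfolding lam_A_def using Fpos by (simp add: pos_le_divide_eq mult.commute)
  also have "\<dots> \<le> lam_n n d t" by (rule lam_A_le_lam_n[OF A])
  finally show ?thesis .
qed

lemma construct:
  assumes dn: "d \<le> n" and d2: "2 \<le> d" and kd: "k < d" and S: "S \<subseteq> Pow {..<d - k}"
    and cs: "card S * 2 ^ k = s" and s1: "1 \<le> s" and sd: "s < 2 ^ d"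
  shows "lam_n n d (s + 1) \<ge> exp (-1) * (1 - 1 / 2 ^ k)" "lam_n n d (s - 1) \<ge> exp (-1) * (1 - 1 / 2 ^ k)"
proof -
  define m where "m = d - k"
  obtain n' where n': "n = Suc n'" using dn d2 by (cases n) auto
  define A0 where "A0 = {x \<in> F2vec n. x \<inter> {..<m} \<in> S}"
  define G where "G = {Q \<in> flats n d. good m Q}"
  have ne: "flats n d \<noteq> {}" using flats_nonempty[OF dn] .
  have GF: "G \<subseteq> flats n d" unfolding G_def by auto
  have fG: "finite G" using GF finite_subset by (metis finite_flats)
  have md: "m \<le> d" "d - m = k" unfolding m_def using kd by auto
  have QA0: "card (Q \<inter> A0) = s" if "Q \<in> G" for Q
    using good_inter_card[of Q n d m S] that md S cs unfolding G_def A0_def m_def by auto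
  have Qc: "card Q = 2 ^ d" if "Q \<in> G" for Q using that flat_card unfolding G_def by blast
  have Qs: "Q \<subseteq> F2vec n" if "Q \<in> G" for Q using that flat_sub unfolding G_def by blast
  have fQ: "finite Q" if "Q \<in> G" for Q using that flat_finite unfolding G_def by blast
  have beta: "real (card G) \<ge> real (card (flats n d)) * (1 - 1 / 2 ^ k)"
  proof -
    have gc: "real (card G) * 2 ^ d \<ge> real (card (flats n d)) * (2 ^ d - (2 ^ m - 1))"
      unfolding G_def n' by (rule good_count) (use md dn n' in auto)
    have "(2::real) ^ d = 2 ^ m * 2 ^ k" using md by (simp add: power_add[symmetric])
    then have "(2::real) ^ d - (2 ^ m - 1) \<ge> 2 ^ d * (1 - 1 / 2 ^ k)" by (simp add: algebra_simps)
    then have "real (card (flats n d)) * (2 ^ d - (2 ^ m - 1)) \<ge> real (card (flats n d)) * (2 ^ d * (1 - 1 / 2 ^ k))"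
      by (rule mult_left_mono) simp
    with gc have "real (card G) * 2 ^ d \<ge> (real (card (flats n d)) * (1 - 1 / 2 ^ k)) * 2 ^ d"
      by (simp add: algebra_simps)
    then show ?thesis by simp
  qed
  have FA0: "A0 \<subseteq> F2vec n" unfolding A0_def by auto
  show "lam_n n d (s + 1) \<ge> exp (-1) * (1 - 1 / 2 ^ k)"
  proof -
    define M where "M = 2 ^ d - s"
    have M1: "M \<ge> 1" unfolding M_def using sd by simp
    have TQ: "Q - A0 \<subseteq> F2vec n - A0 \<and> card (Q - A0) = M" if "Q \<in> G" for Q
    proof
      show "Q - A0 \<subseteq> F2vec n - A0" using Qs[OF that] by auto
      have "card (Q - A0) = card Q - card (Q \<inter> A0)" by (rule card_Diff_subset_Int) (use fQ[OF that] in auto)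
      then show "card (Q - A0) = M" using Qc[OF that] QA0[OF that] unfolding M_def by simp
    qed
    have p: "0 \<le> 1 / real M" "1 / real M \<le> 1" using M1 by auto
    obtain R where R: "R \<subseteq> F2vec n - A0"
      "real (card {Q \<in> G. card (R \<inter> (Q - A0)) = 1}) \<ge> real (card G) * (real M * (1 / real M) * (1 - 1 / real M) ^ (M - 1))"
      using averaging[of "F2vec n - A0" G "\<lambda>Q. Q - A0" M "1 / real M", OF _ fG TQ p] by auto
    have H: "real (card {Q \<in> G. card (R \<inter> (Q - A0)) = 1}) \<ge> real (card G) * exp (-1)"
      using R(2) mult_left_mono[OF poisson_bound[OF M1], of "real (card G)"] by simp
    have A: "A0 \<union> R \<in> Pow (F2vec n)" using R(1) FA0 by auto
    have PA: "card (Q \<inter> (A0 \<union> R)) = s + 1" if "Q \<in> G" "card (R \<inter> (Q - A0)) = 1" for Q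
    proof -
      have "Q \<inter> (A0 \<union> R) = (Q \<inter> A0) \<union> (R \<inter> (Q - A0))" using R(1) by auto
      moreover have "(Q \<inter> A0) \<inter> (R \<inter> (Q - A0)) = {}" by auto
      moreover have "finite (Q \<inter> A0)" "finite (R \<inter> (Q - A0))" using fQ[OF that(1)] by auto
      ultimately have "card (Q \<inter> (A0 \<union> R)) = card (Q \<inter> A0) + card (R \<inter> (Q - A0))"
        by (simp add: card_Un_disjoint)
      then show ?thesis using QA0[OF that(1)] that(2) by simp
    qed
    have "lam_n n d (s + 1) \<ge> exp (-1) * (1 - 1 / 2 ^ k)"
      by (rule lower_from_count[OF GF ne beta A H PA]) auto
    then show ?thesis .
  qed
  show "lam_n n d (s - 1) \<ge> exp (-1) * (1 - 1 / 2 ^ k)"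
  proof -
    define M where "M = s"
    have M1: "M \<ge> 1" unfolding M_def using s1 by simp
    have TQ: "Q \<inter> A0 \<subseteq> A0 \<and> card (Q \<inter> A0) = M" if "Q \<in> G" for Q
      using QA0[OF that] unfolding M_def by auto
    have p: "0 \<le> 1 / real M" "1 / real M \<le> 1" using M1 by auto
    have fA0: "finite A0" using FA0 finite_subset by (metis finite_F2vec)
    obtain R where R: "R \<subseteq> A0"
      "real (card {Q \<in> G. card (R \<inter> (Q \<inter> A0)) = 1}) \<ge> real (card G) * (real M * (1 / real M) * (1 - 1 / real M) ^ (M - 1))"
      using averaging[of A0 G "\<lambda>Q. Q \<inter> A0" M "1 / real M", OF fA0 fG TQ p] by auto
    have H: "real (card {Q \<in> G. card (R \<inter> (Q \<inter> A0)) = 1}) \<ge> real (card G) * exp (-1)"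
      using R(2) mult_left_mono[OF poisson_bound[OF M1], of "real (card G)"] by simp
    have A: "A0 - R \<in> Pow (F2vec n)" using FA0 by auto
    have PA: "card (Q \<inter> (A0 - R)) = s - 1" if "Q \<in> G" "card (R \<inter> (Q \<inter> A0)) = 1" for Q
    proof -
      have "Q \<inter> (A0 - R) = (Q \<inter> A0) - (R \<inter> (Q \<inter> A0))" by auto
      moreover have "R \<inter> (Q \<inter> A0) \<subseteq> Q \<inter> A0" by auto
      moreover have "finite (Q \<inter> A0)" using fQ[OF that(1)] by auto
      ultimately have "card (Q \<inter> (A0 - R)) = card (Q \<inter> A0) - card (R \<inter> (Q \<inter> A0))"
        by (simp add: card_Diff_subset finite_subset)
      then show ?thesis using QA0[OF that(1)] that(2) by simp
    qed
    have "lam_n n d (s - 1) \<ge> exp (-1) * (1 - 1 / 2 ^ k)"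
      by (rule lower_from_count[OF GF ne beta A H PA]) auto
    then show ?thesis .
  qed
qed

theorem corollary1p6:
  fixes d s j k :: nat
  assumes "d > 1" and "1 < s" and "s < 2 ^ d"
    and "s = j * 2 ^ k" and "odd j" and "k \<ge> 1"
  shows "lam_star d (s + 1) \<ge> (1 / exp 1) * (1 - 2 powr (- real k)) \<and>
         lam_star d (s - 1) \<ge> (1 / exp 1) * (1 - 2 powr (- real k))"
proof -
  have j1: "j \<ge> 1" using assms(5) by (cases j) auto
  have "(2::nat) ^ k \<le> s" using assms(4) j1 by simp
  then have "(2::nat) ^ k < 2 ^ d" using assms(3) by linarith
  then have kd: "k < d" by simp
  define m where "m = d - k"
  have dmk: "2 ^ d = (2::nat) ^ m * 2 ^ k" unfolding m_def using kd by (simp add: power_add[symmetric])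
  have "j * 2 ^ k < 2 ^ m * 2 ^ k" using assms(3,4) dmk by simp
  then have "j < 2 ^ m" by simp
  then have "j \<le> card (Pow {..<m})" by (simp add: card_Pow)
  then obtain S where S: "S \<subseteq> Pow {..<m}" "card S = j" by (rule obtain_subset_with_card_n)
  have cs: "card S * 2 ^ k = s" using S(2) assms(4) by simp
  have c: "(1 / exp 1) * (1 - 2 powr (- real k)) = exp (-1) * (1 - 1 / 2 ^ k)"
    by (simp add: exp_minus powr_minus powr_realpow inverse_eq_divide)
  have d2: "2 \<le> d" using assms(1) by simp
  have s1: "1 \<le> s" using assms(2) by simp
  have "exp (-1) * (1 - 1 / 2 ^ k) \<le> lam_star d (s + 1)"
    unfolding lam_star_def
  proof (rule lim_bound[where d=d])
    fix n assume "d \<le> n"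
    then show "lam_n (Suc n) d (s + 1) \<le> lam_n n d (s + 1)" by (rule monotone_step)
    show "exp (-1) * (1 - 1 / 2 ^ k) \<le> lam_n n d (s + 1)"
      by (rule construct(1)[OF \<open>d \<le> n\<close> d2 kd S(1)[unfolded m_def] cs s1 assms(3)])
  qed
  moreover have "exp (-1) * (1 - 1 / 2 ^ k) \<le> lam_star d (s - 1)"
    unfolding lam_star_def
  proof (rule lim_bound[where d=d])
    fix n assume "d \<le> n"
    then show "lam_n (Suc n) d (s - 1) \<le> lam_n n d (s - 1)" by (rule monotone_step)
    show "exp (-1) * (1 - 1 / 2 ^ k) \<le> lam_n n d (s - 1)"
      by (rule construct(2)[OF \<open>d \<le> n\<close> d2 kd S(1)[unfolded m_def] cs s1 assms(3)])
  qed
  ultimately show ?thesis unfolding c by simp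
qed

end
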